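(* Let $\mathcal{S}=(U,\mathcal{P})$ be a relational schema with finite domain $U$, let $D=D^n\cup D^x$ be a database instance (split into endogenous tuples $D^n$ and exogenous tuples $D^x$), let $\mathcal{Q}$ be a Boolean first-order query, and let $\tau\in D^n$. Then the causal effect of $\tau$ on $\mathcal{Q}$ in $D$ satisfies $\mathcal{E}^D_{\tau,\mathcal{Q}}\geq 0$.
   Context: A database instance is a finite set of ground atoms (tuples) $P(c_1,\dots,c_n)$ with $P\in\mathcal{P}$ of arity $n$ and $c_i\in U$; it is partitioned as $D=D^n\cup D^x$ into endogenous and exogenous tuples. Lineage: for every potential tuple $\tau$ introduce a propositional variable $X_\tau$. The lineage $\Phi_{\mathcal{Q}}$ of a Boolean FO query is defined inductively: $\Phi_\tau:=X_\tau$ for an atom $\tau$; $\Phi_{a=a}:=\mathit{true}$; $\Phi_{a=b}:=\mathit{false}$ for distinct constants; $\Phi_{\mathcal{Q}_1\wedge\mathcal{Q}_2}:=\Phi_{\mathcal{Q}_1}\wedge\Phi_{\mathcal{Q}_2}$; $\Phi_{\mathcal{Q}_1\vee\mathcal{Q}_2}:=\Phi_{\mathcal{Q}_1}\vee\Phi_{\mathcal{Q}_2}$; $\Phi_{\exists x\,\mathcal{Q}}:=\bigvee_{c\in U}\Phi_{\mathcal{Q}[c/x]}$; $\Phi_{\neg\mathcal{Q}}:=\neg\Phi_{\mathcal{Q}}$. Assuming negation occurs only in front of variables, the $D$-lineage $\Phi_{\mathcal{Q}}(D)$ is obtained from $\Phi_{\mathcal{Q}}$ by replacing each positive occurrence of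 $X_\tau$ with $\tau\notin D$ by $\mathit{false}$, and each literal $\neg X_\tau$ with $\tau\in D$ by $\mathit{false}$. Standing assumptions: (a) no variable occurs both positively and negatively in $\Phi_{\mathcal{Q}}(D)$; (b) every $\tau\notin D$ whose variable occurs negatively in $\Phi_{\mathcal{Q}}(D)$ is regarded as endogenous. Let $\mathit{Var}(\Phi_{\mathcal{Q}}(D))$ be its set of variables; the exogenous ones (those of tuples in $D^x$) split into positively occurring ones $\mathit{Var}^{x,+}$ and negatively occurring ones $\mathit{Var}^{x,-}$. Probability space: $\Omega$ is the set of all truth assignments $\sigma:\mathit{Var}(\Phi_{\mathcal{Q}}(D))\to\{0,1\}$ with the uniform distribution $P$. The query is the random variable $\mathcal{Q}(\sigma)=1$ iff $\sigma\models\Phi_{\mathcal{Q}}(D)$. For a variable $X$ and $x\in\{0,1\}$, the event $\mathit{do}(X=x)$ is $\{\sigma\in\Omega:\sigma(X)=x\}$. For an endogenous $\tau$, $E(\mathcal{Q}\mid \mathit{do}(X_\tau=v))$ denotes the conditional expectation of $\mathcal{Q}$ given the intersection of $\mathit{do}(X_\tau=v)$ with all $\mathit{do}(X_{\tau'}=1)$ for $X_{\tau'}\in\mathit{Var}^{x,+}$ and all $\mathit{do}(X_{\tau'}=0)$ for $X_{\tau'}\in\mathit{Var}^{x,-}$. The causal effect of $\tau$ on $\mathcal{Q}$ in $D$ is $\mathcal{E}^D_{\tau,\mathcal{Q}}:=E(\mathcal{Q}\mid\mathit{do}(X_\tau=v))-E(\mathcal{Q}\mid\mathit{do}(X_\tau=1-v))$,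 where $v=1$ if $\tau\in D$ and $v=0$ if $\tau\notin D$. *)

theory Defs
  imports Complex_Main
begin

datatype 'c trm = TVar nat | TConst 'c

datatype ('p, 'c) query =
    QAtom 'p "'c trm list"
  | QEq "'c trm" "'c trm"
  | QConj "('p, 'c) query" "('p, 'c) query"
  | QDisj "('p, 'c) query" "('p, 'c) query"
  | QEx nat "('p, 'c) query"
  | QNeg "('p, 'c) query"

type_synonym ('p, 'c) tuple = "'p \<times> 'c list"

fun tvars :: "'c trm \<Rightarrow> nat set" where
  "tvars (TVar x) = {x}"
| "tvars (TConst c) = {}"

fun tconsts :: "'c trm \<Rightarrow> 'c set" where
  "tconsts (TVar x) = {}"
| "tconsts (TConst c) = {c}"

fun fv :: "('p, 'c) query \<Rightarrow> nat set" where
  "fv (QAtom p ts) = (\<Union>t\<in>set ts. tvars t)"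
| "fv (QEq s t) = tvars s \<union> tvars t"
| "fv (QConj a b) = fv a \<union> fv b"
| "fv (QDisj a b) = fv a \<union> fv b"
| "fv (QEx x a) = fv a - {x}"
| "fv (QNeg a) = fv a"

fun wf_query :: "'c set \<Rightarrow> 'p set \<Rightarrow> ('p \<Rightarrow> nat) \<Rightarrow> ('p, 'c) query \<Rightarrow> bool" where
  "wf_query U P ar (QAtom p ts) =
     (p \<in> P \<and> length ts = ar p \<and> (\<forall>t\<in>set ts. tconsts t \<subseteq> U))"
| "wf_query U P ar (QEq s t) = (tconsts s \<subseteq> U \<and> tconsts t \<subseteq> U)"
| "wf_query U P ar (QConj a b) = (wf_query U P ar a \<and> wf_query U P ar b)"
| "wf_query U P ar (QDisj a b) = (wf_query U P ar a \<and> wf_query U P ar b)"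
| "wf_query U P ar (QEx x a) = wf_query U P ar a"
| "wf_query U P ar (QNeg a) = wf_query U P ar a"

definition wf_tuple :: "'c set \<Rightarrow> 'p set \<Rightarrow> ('p \<Rightarrow> nat) \<Rightarrow> ('p, 'c) tuple \<Rightarrow> bool" where
  "wf_tuple U P ar \<tau> = (fst \<tau> \<in> P \<and> length (snd \<tau>) = ar (fst \<tau>) \<and> set (snd \<tau>) \<subseteq> U)"

datatype 'v pf = PTrue | PFalse | PVar 'v | PNot "'v pf" | PAnd "'v pf" "'v pf" | POr "'v pf" "'v pf"

fun peval :: "'v set \<Rightarrow> 'v pf \<Rightarrow> bool" where
  "peval S PTrue = True"
| "peval S PFalse = False"
| "peval S (PVar v) = (v \<in> S)"
| "peval S (PNot a) = (\<not> peval S a)"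
| "peval S (PAnd a b) = (peval S a \<and> peval S b)"
| "peval S (POr a b) = (peval S a \<or> peval S b)"

text \<open>Evaluation of terms under a partial assignment of query variables; this
  realises the substitution Q[c/x].\<close>
fun teval :: "(nat \<Rightarrow> 'c option) \<Rightarrow> 'c trm \<Rightarrow> 'c option" where
  "teval env (TVar x) = env x"
| "teval env (TConst c) = Some c"

definition ulist :: "'c set \<Rightarrow> 'c list" where
  "ulist U = (SOME xs. set xs = U \<and> distinct xs)"

fun lineage_env :: "'c list \<Rightarrow> (nat \<Rightarrow> 'c option) \<Rightarrow> ('p, 'c) query \<Rightarrow> ('p, 'c) tuple pf" where
  "lineage_env us env (QAtom p ts) =
     (if (\<forall>t\<in>set ts. teval env t \<noteq> None)
      then PVar (p, map (\<lambda>t. the (teval env t)) ts) else PFalse)"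
| "lineage_env us env (QEq s t) =
     (case (teval env s, teval env t) of
        (Some a, Some b) \<Rightarrow> (if a = b then PTrue else PFalse)
      | _ \<Rightarrow> PFalse)"
| "lineage_env us env (QConj a b) = PAnd (lineage_env us env a) (lineage_env us env b)"
| "lineage_env us env (QDisj a b) = POr (lineage_env us env a) (lineage_env us env b)"
| "lineage_env us env (QEx x a) =
     foldr POr (map (\<lambda>c. lineage_env us (env(x := Some c)) a) us) PFalse"
| "lineage_env us env (QNeg a) = PNot (lineage_env us env a)"

definition lineage :: "'c set \<Rightarrow> ('p, 'c) query \<Rightarrow> ('p, 'c) tuple pf" where
  "lineage U Q = lineage_env (ulist U) Map.empty Q"

fun neg_only_vars :: "'v pf \<Rightarrow> bool" where
  "neg_only_vars PTrue = True"
| "neg_only_vars PFalse = True"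
| "neg_only_vars (PVar v) = True"
| "neg_only_vars (PNot a) = (case a of PVar v \<Rightarrow> True | _ \<Rightarrow> False)"
| "neg_only_vars (PAnd a b) = (neg_only_vars a \<and> neg_only_vars b)"
| "neg_only_vars (POr a b) = (neg_only_vars a \<and> neg_only_vars b)"

fun dlineage :: "'v set \<Rightarrow> 'v pf \<Rightarrow> 'v pf" where
  "dlineage D PTrue = PTrue"
| "dlineage D PFalse = PFalse"
| "dlineage D (PVar v) = (if v \<in> D then PVar v else PFalse)"
| "dlineage D (PNot a) =
     (case a of PVar v \<Rightarrow> (if v \<in> D then PFalse else PNot (PVar v))
      | _ \<Rightarrow> PNot (dlineage D a))"
| "dlineage D (PAnd a b) = PAnd (dlineage D a) (dlineage D b)"
| "dlineage D (POr a b) = POr (dlineage D a) (dlineage D b)"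

text \<open>Variables occurring with polarity b (True = positively, False = negatively).\<close>
fun occ :: "bool \<Rightarrow> 'v pf \<Rightarrow> 'v set" where
  "occ b PTrue = {}"
| "occ b PFalse = {}"
| "occ b (PVar v) = (if b then {v} else {})"
| "occ b (PNot a) = occ (\<not> b) a"
| "occ b (PAnd a b') = occ b a \<union> occ b b'"
| "occ b (POr a b') = occ b a \<union> occ b b'"

definition pvars :: "'v pf \<Rightarrow> 'v set" where
  "pvars \<phi> = occ True \<phi> \<union> occ False \<phi>"

text \<open>A truth assignment sigma on a finite variable set V is represented by the
  set S \<subseteq> V of variables it maps to 1; Omega is the powerset of V with the
  uniform distribution.\<close>
definition cond_exp :: "'v pf \<Rightarrow> 'v set set \<Rightarrow> real" where
  "cond_exp \<Phi> A = real (card {S \<in> A. peval S \<Phi>}) / real (card A)"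

text \<open>The event do(X_tau = v) intersected with do(X = 1) for exogenous positively
  occurring X and do(X = 0) for exogenous negatively occurring X.\<close>
definition do_event :: "'v set \<Rightarrow> 'v \<Rightarrow> bool \<Rightarrow> 'v set \<Rightarrow> 'v set \<Rightarrow> 'v set set" where
  "do_event V \<tau> val Xpos Xneg =
     {S. S \<subseteq> V \<and> (\<tau> \<in> S \<longleftrightarrow> val) \<and> Xpos \<subseteq> S \<and> Xneg \<inter> S = {}}"

text \<open>Causal effect of tau on Q in D = Dn \<union> Dx.  The sample space consists of
  the assignments to Var(Phi_Q(D)) together with X_tau.\<close>
definition causal_effect ::
  "'c set \<Rightarrow> ('p, 'c) tuple set \<Rightarrow> ('p, 'c) tuple set \<Rightarrow> ('p, 'c) tuple
     \<Rightarrow> ('p, 'c) query \<Rightarrow> real" where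
  "causal_effect U Dn Dx \<tau> Q =
    (let D = Dn \<union> Dx;
         \<Phi> = dlineage D (lineage U Q);
         V = pvars \<Phi> \<union> {\<tau>};
         Xpos = occ True \<Phi> \<inter> Dx;
         Xneg = occ False \<Phi> \<inter> Dx;
         v = (\<tau> \<in> D)
     in cond_exp \<Phi> (do_event V \<tau> v Xpos Xneg)
        - cond_exp \<Phi> (do_event V \<tau> (\<not> v) Xpos Xneg))"

end

theory Submission
  imports Defs
begin

lemma occ_finite: "finite (occ b \<phi>)"
  by (induction \<phi> arbitrary: b) auto

lemma mono_tau:
  "(\<tau> \<notin> occ False \<phi> \<longrightarrow> peval S \<phi> \<longrightarrow> peval (insert \<tau> S) \<phi>) \<and>
   (\<tau> \<notin> occ True \<phi> \<longrightarrow> peval (insert \<tau> S) \<phi> \<longrightarrow> peval S \<phi>)"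
  by (induction \<phi>) auto

lemma dlin_occ:
  "neg_only_vars L \<Longrightarrow> occ False (dlineage D L) \<inter> D = {} \<and> occ True (dlineage D L) \<subseteq> D"
proof (induction L)
  case (PNot a)
  then show ?case by (cases a) auto
qed auto

theorem proposition1:
  fixes U :: "'c set" and P :: "'p set" and ar :: "'p \<Rightarrow> nat"
    and Dn Dx :: "('p, 'c) tuple set" and Q :: "('p, 'c) query"
    and \<tau> :: "('p, 'c) tuple"
  assumes "finite U" and "finite P"
    and "finite (Dn \<union> Dx)" and "Dn \<inter> Dx = {}"
    and "\<forall>t \<in> Dn \<union> Dx. wf_tuple U P ar t"
    and "wf_query U P ar Q" and "fv Q = {}"
    and "neg_only_vars (lineage U Q)"
    and "occ True (dlineage (Dn \<union> Dx) (lineage U Q))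
         \<inter> occ False (dlineage (Dn \<union> Dx) (lineage U Q)) = {}"
    and "\<tau> \<in> Dn"
  shows "causal_effect U Dn Dx \<tau> Q \<ge> 0"
proof -
  define D where "D = Dn \<union> Dx"
  define \<Phi> where "\<Phi> = dlineage D (lineage U Q)"
  define V where "V = pvars \<Phi> \<union> {\<tau>}"
  define Xpos where "Xpos = occ True \<Phi> \<inter> Dx"
  define Xneg where "Xneg = occ False \<Phi> \<inter> Dx"
  define A1 where "A1 = do_event V \<tau> True Xpos Xneg"
  define A0 where "A0 = do_event V \<tau> False Xpos Xneg"
  have tD: "\<tau> \<in> D" using assms(10) D_def by auto
  have tnx: "\<tau> \<notin> Dx" using assms(4,10) by auto
  have nF: "\<tau> \<notin> occ False \<Phi>" using dlin_occ[OF assms(8), of D] tD \<Phi>_def by auto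
  have finV: "finite V" unfolding V_def pvars_def by (simp add: occ_finite)
  have ce: "causal_effect U Dn Dx \<tau> Q = cond_exp \<Phi> A1 - cond_exp \<Phi> A0"
    unfolding causal_effect_def Let_def A1_def A0_def Xpos_def Xneg_def V_def \<Phi>_def D_def
    using tD D_def by simp
  have fin1: "finite A1" unfolding A1_def do_event_def
    by (rule finite_subset[of _ "Pow V"]) (auto simp: finV)
  have fin0: "finite A0" unfolding A0_def do_event_def
    by (rule finite_subset[of _ "Pow V"]) (auto simp: finV)
  have inj: "inj_on (insert \<tau>) A0" unfolding A0_def do_event_def inj_on_def by auto
  have img: "insert \<tau> ` A0 = A1"
  proof
    show "insert \<tau> ` A0 \<subseteq> A1" unfolding A0_def A1_def do_event_def V_def Xneg_def
      using tnx by auto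
    show "A1 \<subseteq> insert \<tau> ` A0"
    proof
      fix S assume S: "S \<in> A1"
      hence "S - {\<tau>} \<in> A0" using tnx unfolding A0_def A1_def do_event_def Xpos_def by auto
      moreover have "S = insert \<tau> (S - {\<tau>})" using S unfolding A1_def do_event_def by auto
      ultimately show "S \<in> insert \<tau> ` A0" by blast
    qed
  qed
  have cardeq: "card A1 = card A0" using card_image[OF inj] img by simp
  have sub: "insert \<tau> ` {S \<in> A0. peval S \<Phi>} \<subseteq> {S \<in> A1. peval S \<Phi>}"
    using img mono_tau[of \<tau> \<Phi>] nF by auto
  have "card {S \<in> A0. peval S \<Phi>} = card (insert \<tau> ` {S \<in> A0. peval S \<Phi>})"
    by (rule card_image[symmetric]) (rule inj_on_subset[OF inj], auto)
  also have "\<dots> \<le> card {S \<in> A1. peval S \<Phi>}"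
    by (rule card_mono) (use fin1 sub in auto)
  finally have le: "card {S \<in> A0. peval S \<Phi>} \<le> card {S \<in> A1. peval S \<Phi>}" .
  have "cond_exp \<Phi> A0 \<le> cond_exp \<Phi> A1"
    unfolding cond_exp_def cardeq using le by (simp add: divide_right_mono)
  thus ?thesis using ce by simp
qed

end
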